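(* Let $n\ge 3$ and let $A=[a_{ij}]_{i,j=1}^{n-1}$ be a real $(n-1)\times(n-1)$ matrix with zero diagonal, with LOP objective function $f_A$ on $\Sigma_{n-1}$. Define the $n\times n$ matrix $A'=[a_{ij}]_{i,j=1}^{n}$ whose upper-left $(n-1)\times(n-1)$ block is $A$, with $a_{in}=-\sum_{j=1}^{n-1}(a_{ij}-a_{ji})$ for all $i=1,\dots,n-1$ and $a_{ni}=0$ for all $i=1,\dots,n$, and let $f_{A'}$ be its LOP objective function on $\Sigma_n$. Then $\sigma'=[i_1\ i_2\ \cdots\ i_{n-1}\ n]$ is a global maximum of $f_{A'}$ if and only if $\sigma=[i_1\ i_2\ \cdots\ i_{n-1}]$ is a global maximum of $f_A$.
   Context: For a real $m\times m$ matrix $M=[m_{ij}]$ the LOP objective function is $f_M(\sigma)=\sum_{k=1}^{m-1}\sum_{l=k+1}^m m_{\sigma(k)\sigma(l)}$ for $\sigma\in\Sigma_m$, the symmetric group on $\{1,\dots,m\}$; $[i_1\cdots i_m]$ denotes the permutation with $\sigma(k)=i_k$ (the index placed in position $k$). A global maximum (optimum) is a maximizer of the objective over $\Sigma_m$. *)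

theory Defs
  imports Complex_Main "HOL-Combinatorics.Permutations"
begin

text \<open>Matrices are functions nat => nat => real, indexed by 1..m.
  A permutation of {1..m} is a function sigma with sigma permutes {1..m};
  sigma k is the index placed in position k.\<close>

definition lop_obj :: "(nat \<Rightarrow> nat \<Rightarrow> real) \<Rightarrow> nat \<Rightarrow> (nat \<Rightarrow> nat) \<Rightarrow> real" where
  "lop_obj M m \<sigma> = (\<Sum>k = 1..m - 1. \<Sum>l = k + 1..m. M (\<sigma> k) (\<sigma> l))"

definition lop_global_max :: "(nat \<Rightarrow> nat \<Rightarrow> real) \<Rightarrow> nat \<Rightarrow> (nat \<Rightarrow> nat) \<Rightarrow> bool" where
  "lop_global_max M m \<sigma> \<longleftrightarrow> \<sigma> permutes {1..m} \<and>
     (\<forall>\<tau>. \<tau> permutes {1..m} \<longrightarrow> lop_obj M m \<tau> \<le> lop_obj M m \<sigma>)"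

definition ext_matrix :: "(nat \<Rightarrow> nat \<Rightarrow> real) \<Rightarrow> nat \<Rightarrow> nat \<Rightarrow> nat \<Rightarrow> real" where
  "ext_matrix A n i j =
     (if i \<le> n - 1 \<and> j \<le> n - 1 then A i j
      else if i \<le> n - 1 \<and> j = n then - (\<Sum>k = 1..n - 1. A i k - A k i)
      else 0)"

end

theory Submission
  imports Defs
begin

definition gpos :: "(nat \<Rightarrow> nat \<Rightarrow> real) \<Rightarrow> nat \<Rightarrow> (nat \<Rightarrow> nat) \<Rightarrow> real" where
  "gpos M m \<pi> = (\<Sum>i\<in>{1..m}. \<Sum>j\<in>{1..m}. if \<pi> i < \<pi> j then M i j else 0)"

lemma L0:
  assumes "m \<ge> 1"
  shows "lop_obj M m \<tau> = (\<Sum>k\<in>{1..m}. \<Sum>l\<in>{1..m}. if k < l then M (\<tau> k) (\<tau> l) else 0)"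
proof -
  have inner: "(\<Sum>l\<in>{1..m}. if k < l then M (\<tau> k) (\<tau> l) else 0) = (\<Sum>l = k + 1..m. M (\<tau> k) (\<tau> l))" for k
  proof -
    have e: "{l\<in>{1..m}. k < l} = {k+1..m}" by auto
    have "(\<Sum>l\<in>{1..m}. if k < l then M (\<tau> k) (\<tau> l) else 0) = (\<Sum>l\<in>{l\<in>{1..m}. k < l}. M (\<tau> k) (\<tau> l))"
      by (rule sum.inter_filter[symmetric]) simp
    then show ?thesis unfolding e .
  qed
  have ins: "{1..m} = insert m {1..m-1}" using assms by auto
  have nin: "m \<notin> {1..m-1}" by auto
  have z: "(\<Sum>l\<in>{1..m}. if m < l then M (\<tau> m) (\<tau> l) else 0) = 0"
    by (rule sum.neutral) auto
  have "(\<Sum>k\<in>{1..m}. \<Sum>l\<in>{1..m}. if k < l then M (\<tau> k) (\<tau> l) else 0)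
     = (\<Sum>k\<in>insert m {1..m-1}. \<Sum>l\<in>{1..m}. if k < l then M (\<tau> k) (\<tau> l) else 0)"
    by (subst ins, rule refl)
  also have "\<dots> = (\<Sum>k\<in>{1..m-1}. \<Sum>l\<in>{1..m}. if k < l then M (\<tau> k) (\<tau> l) else 0)"
    by (subst sum.insert[OF finite_atLeastAtMost nin]) (simp only: z add_0_left)
  also have "\<dots> = lop_obj M m \<tau>" unfolding lop_obj_def inner ..
  finally show ?thesis by simp
qed

lemma L1:
  assumes "m \<ge> 1" "bij_betw \<pi> {1..m} {1..m}" "\<forall>i\<in>{1..m}. \<tau> (\<pi> i) = i"
  shows "lop_obj M m \<tau> = gpos M m \<pi>"
proof -
  have "lop_obj M m \<tau> = (\<Sum>k\<in>{1..m}. \<Sum>l\<in>{1..m}. if k < l then M (\<tau> k) (\<tau> l) else 0)"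
    using L0 assms(1) by blast
  also have "\<dots> = (\<Sum>i\<in>{1..m}. \<Sum>l\<in>{1..m}. if \<pi> i < l then M (\<tau> (\<pi> i)) (\<tau> l) else 0)"
    using sum.reindex_bij_betw[OF assms(2), symmetric] by simp
  also have "\<dots> = (\<Sum>i\<in>{1..m}. \<Sum>j\<in>{1..m}. if \<pi> i < \<pi> j then M (\<tau> (\<pi> i)) (\<tau> (\<pi> j)) else 0)"
    by (rule sum.cong[OF refl], rule sum.reindex_bij_betw[OF assms(2), symmetric])
  also have "\<dots> = gpos M m \<pi>" unfolding gpos_def
  proof (intro sum.cong refl)
    fix i j assume ij: "i \<in> {1..m}" "j \<in> {1..m}"
    have "\<tau> (\<pi> i) = i" "\<tau> (\<pi> j) = j" using assms(3) ij by blast+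
    moreover from ij have "\<pi> i \<in> {1..m}" "\<pi> j \<in> {1..m}" using bij_betwE[OF assms(2)] by blast+
    ultimately show "(if \<pi> i < \<pi> j then M (\<tau> (\<pi> i)) (\<tau> (\<pi> j)) else 0) = (if \<pi> i < \<pi> j then M i j else 0)"
      using assms(3) by simp
  qed
  finally show ?thesis .
qed

lemma cmp:
  fixes a b p n :: nat
  assumes "a \<noteq> p" "b \<noteq> p" "p \<le> n" "a \<le> n" "b \<le> n" "1 \<le> a" "1 \<le> b"
  shows "((if a < p then a + n - p else a - p) < (if b < p then b + n - p else b - p))
     = (if (a < p) = (b < p) then a < b else b < p)"
proof (cases "a < p"; cases "b < p")
  assume "a < p" "b < p" then show ?thesis using assms by (simp; arith)
next
  assume "a < p" "\<not> b < p" then show ?thesis using assms by (simp; arith)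
next
  assume "\<not> a < p" "b < p" then show ?thesis using assms by (simp; arith)
next
  assume "\<not> a < p" "\<not> b < p" then show ?thesis using assms by (simp; arith)
qed
lemma key_into:
  fixes a p N :: nat
  assumes "a \<noteq> p" "1 \<le> a" "a \<le> Suc N" "1 \<le> p" "p \<le> Suc N"
  shows "(if a < p then a + Suc N - p else a - p) \<in> {1..N}"
proof (cases "a < p")
  case True then show ?thesis using assms by (simp; arith)
next
  case False then show ?thesis using assms by (simp; arith)
qed

lemma key:
  fixes a b p n :: nat and x :: real
  assumes "a \<noteq> b" "a \<noteq> p" "b \<noteq> p" "p \<le> n" "a \<le> n" "b \<le> n" "1 \<le> a" "1 \<le> b"
  shows "(if a < b then x else 0) - (if a < p then 1 else 0) * x + (if b < p then 1 else 0) * x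
     = (if (if a < p then a + n - p else a - p) < (if b < p then b + n - p else b - p) then x else 0)"
  unfolding cmp[OF assms(2-8)] using assms(1)
  by (cases "a < p"; cases "b < p"; cases "a < b") simp_all

lemma key_inj:
  fixes a b p n :: nat
  assumes "a \<noteq> b" "a \<noteq> p" "b \<noteq> p" "p \<le> n" "a \<le> n" "b \<le> n" "1 \<le> a" "1 \<le> b"
  shows "(if a < p then a + n - p else a - p) \<noteq> (if b < p then b + n - p else b - p)"
proof
  assume e: "(if a < p then a + n - p else a - p) = (if b < p then b + n - p else b - p)"
  have c1: "\<not> (if (a < p) = (b < p) then a < b else b < p)"
    using cmp[OF assms(2-8)] e by simp
  have c2: "\<not> (if (b < p) = (a < p) then b < a else a < p)"
    using cmp[OF assms(3,2,4,6,5,8,7)] e by simp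
  show False using c1 c2 assms(1) by (cases "a < p"; cases "b < p") auto
qed

lemma L2:
  assumes nN: "n = Suc N" and N1: "N \<ge> 1" and bij: "bij_betw \<pi> {1..n} {1..n}"
  defines "\<pi>' \<equiv> \<lambda>i. if \<pi> i < \<pi> n then \<pi> i + n - \<pi> n else \<pi> i - \<pi> n"
  shows "bij_betw \<pi>' {1..N} {1..N}" and "gpos (ext_matrix A n) n \<pi> = gpos A N \<pi>'"
proof -
  define p where "p = \<pi> n"
  have pr: "p \<in> {1..n}" unfolding p_def using bij_betwE[OF bij] nN by auto
  have inj: "inj_on \<pi> {1..n}" using bij bij_betw_def by blast
  have mem: "\<pi> i \<in> {1..n}" if "i \<in> {1..N}" for i using bij_betwE[OF bij] that nN by auto
  have neqp: "\<pi> i \<noteq> p" if "i \<in> {1..N}" for i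
    using inj that nN unfolding p_def inj_on_def by force
  have neq: "\<pi> i \<noteq> \<pi> j" if "i \<in> {1..N}" "j \<in> {1..N}" "i \<noteq> j" for i j
    using inj that nN unfolding inj_on_def by force
  have pi'_def2: "\<pi>' i = (if \<pi> i < p then \<pi> i + n - p else \<pi> i - p)" for i
    unfolding \<pi>'_def p_def by simp
  have into: "\<pi>' i \<in> {1..N}" if "i \<in> {1..N}" for i
    using mem[OF that] neqp[OF that] pr key_into[of "\<pi> i" p N] unfolding pi'_def2 nN by auto
  have inj': "inj_on \<pi>' {1..N}"
  proof (rule inj_onI)
    fix i j assume i: "i \<in> {1..N}" and j: "j \<in> {1..N}" and e: "\<pi>' i = \<pi>' j"
    show "i = j"
    proof (rule ccontr)
      assume "i \<noteq> j"
      then have "\<pi> i \<noteq> \<pi> j" using neq i j by blast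
      then have "\<pi>' i \<noteq> \<pi>' j" using mem[OF i] mem[OF j] neqp[OF i] neqp[OF j] pr
        unfolding pi'_def2 by (intro key_inj) auto
      then show False using e by blast
    qed
  qed
  have "\<pi>' ` {1..N} = {1..N}"
    by (rule endo_inj_surj) (use into inj' in auto)
  then show "bij_betw \<pi>' {1..N} {1..N}" using inj' bij_betw_def by blast
  define s where "s i = (if \<pi> i < p then (1::real) else 0)" for i
  have set: "{1..n} = insert n {1..N}" using nN by auto
  have nnot: "n \<notin> {1..N}" using nN by auto
  have e1: "ext_matrix A n i j = A i j" if "i \<in> {1..N}" "j \<in> {1..N}" for i j
    using that nN unfolding ext_matrix_def by auto
  have e2: "ext_matrix A n i n = - (\<Sum>k\<in>{1..N}. A i k - A k i)" if "i \<in> {1..N}" for i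
    using that nN unfolding ext_matrix_def by auto
  have e3: "ext_matrix A n n j = 0" for j
    using nN unfolding ext_matrix_def by auto
  let ?E = "ext_matrix A n"
  have "gpos ?E n \<pi> = (\<Sum>i\<in>insert n {1..N}. \<Sum>j\<in>insert n {1..N}. if \<pi> i < \<pi> j then ?E i j else 0)"
    unfolding gpos_def set ..
  also have "\<dots> = (\<Sum>i\<in>insert n {1..N}. (if \<pi> i < p then ?E i n else 0) + (\<Sum>j\<in>{1..N}. if \<pi> i < \<pi> j then ?E i j else 0))"
    by (rule sum.cong[OF refl], subst sum.insert[OF finite_atLeastAtMost nnot], simp add: p_def)
  also have "\<dots> = (\<Sum>i\<in>{1..N}. (if \<pi> i < p then ?E i n else 0) + (\<Sum>j\<in>{1..N}. if \<pi> i < \<pi> j then ?E i j else 0))"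
    by (subst sum.insert[OF finite_atLeastAtMost nnot], simp add: p_def, intro sum.neutral, simp add: e3)
  also have "\<dots> = (\<Sum>i\<in>{1..N}. \<Sum>j\<in>{1..N}. (if \<pi> i < \<pi> j then A i j else 0) - s i * A i j + s i * A j i)"
  proof (rule sum.cong[OF refl])
    fix i assume i: "i \<in> {1..N}"
    have "(\<Sum>j\<in>{1..N}. if \<pi> i < \<pi> j then ?E i j else 0) = (\<Sum>j\<in>{1..N}. if \<pi> i < \<pi> j then A i j else 0)"
      using e1[OF i] by (intro sum.cong refl) simp
    moreover have "(if \<pi> i < p then ?E i n else 0) = (\<Sum>j\<in>{1..N}. - s i * A i j + s i * A j i)"
      using e2[OF i] by (simp add: s_def sum_subtractf sum_negf)
    ultimately show "(if \<pi> i < p then ?E i n else 0) + (\<Sum>j\<in>{1..N}. if \<pi> i < \<pi> j then ?E i j else 0)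
      = (\<Sum>j\<in>{1..N}. (if \<pi> i < \<pi> j then A i j else 0) - s i * A i j + s i * A j i)"
      by (simp add: sum.distrib sum_subtractf)
  qed
  also have "\<dots> = (\<Sum>i\<in>{1..N}. \<Sum>j\<in>{1..N}. (if \<pi> i < \<pi> j then A i j else 0) - s i * A i j)
       + (\<Sum>i\<in>{1..N}. \<Sum>j\<in>{1..N}. s i * A j i)"
    by (simp add: sum.distrib)
  also have "(\<Sum>i\<in>{1..N}. \<Sum>j\<in>{1..N}. s i * A j i) = (\<Sum>i\<in>{1..N}. \<Sum>j\<in>{1..N}. s j * A i j)"
    by (rule sum.swap)
  also have "(\<Sum>i\<in>{1..N}. \<Sum>j\<in>{1..N}. (if \<pi> i < \<pi> j then A i j else 0) - s i * A i j)
       + (\<Sum>i\<in>{1..N}. \<Sum>j\<in>{1..N}. s j * A i j)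
     = (\<Sum>i\<in>{1..N}. \<Sum>j\<in>{1..N}. (if \<pi> i < \<pi> j then A i j else 0) - s i * A i j + s j * A i j)"
    by (simp add: sum.distrib)
  also have "\<dots> = gpos A N \<pi>'"
    unfolding gpos_def
  proof (intro sum.cong refl)
    fix i j assume i: "i \<in> {1..N}" and j: "j \<in> {1..N}"
    show "(if \<pi> i < \<pi> j then A i j else 0) - s i * A i j + s j * A i j = (if \<pi>' i < \<pi>' j then A i j else 0)"
    proof (cases "i = j")
      case True then show ?thesis by simp
    next
      case False
      then have "\<pi> i \<noteq> \<pi> j" using neq i j by blast
      then show ?thesis using mem[OF i] mem[OF j] neqp[OF i] neqp[OF j] pr
        unfolding pi'_def2 s_def by (intro key) auto
    qed
  qed
  finally show "gpos (ext_matrix A n) n \<pi> = gpos A N \<pi>'" .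
qed

lemma gpos_cong:
  assumes "\<And>i. i \<in> {1..m} \<Longrightarrow> \<pi> i = \<rho> i"
  shows "gpos M m \<pi> = gpos M m \<rho>"
  unfolding gpos_def using assms by (intro sum.cong refl) simp

lemma E:
  assumes nN: "n = Suc N" and N1: "N \<ge> 1" and tau: "\<tau> permutes {1..N}"
  shows "lop_obj (ext_matrix A n) n \<tau> = lop_obj A N \<tau>"
proof -
  define \<pi> where "\<pi> = inv \<tau>"
  have pinv: "\<pi> permutes {1..N}" unfolding \<pi>_def by (rule permutes_inv[OF tau])
  have tau': "\<tau> permutes {1..n}" using permutes_subset[OF tau] nN by auto
  have pinv': "\<pi> permutes {1..n}" unfolding \<pi>_def by (rule permutes_inv[OF tau'])
  have pn: "\<pi> n = n" using permutes_not_in[OF pinv] nN by auto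
  have "lop_obj (ext_matrix A n) n \<tau> = gpos (ext_matrix A n) n \<pi>"
    using L1[OF _ permutes_imp_bij[OF pinv']] permutes_inverses(1)[OF tau'] nN unfolding \<pi>_def by auto
  also have "\<dots> = gpos A N (\<lambda>i. if \<pi> i < \<pi> n then \<pi> i + n - \<pi> n else \<pi> i - \<pi> n)"
    by (rule L2(2)[OF nN N1 permutes_imp_bij[OF pinv']])
  also have "\<dots> = gpos A N \<pi>"
  proof (rule gpos_cong)
    fix i assume "i \<in> {1..N}"
    then have "\<pi> i \<in> {1..N}" using permutes_in_image[OF pinv] by auto
    then show "(if \<pi> i < \<pi> n then \<pi> i + n - \<pi> n else \<pi> i - \<pi> n) = \<pi> i" using pn nN by auto
  qed
  also have "\<dots> = lop_obj A N \<tau>"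
    using L1[OF N1 permutes_imp_bij[OF pinv]] permutes_inverses(1)[OF tau] unfolding \<pi>_def by auto
  finally show ?thesis .
qed

lemma Gen:
  assumes nN: "n = Suc N" and N1: "N \<ge> 1" and tau: "\<tau> permutes {1..n}"
  shows "\<exists>\<rho>. \<rho> permutes {1..N} \<and> lop_obj (ext_matrix A n) n \<tau> = lop_obj A N \<rho>"
proof -
  define \<pi> where "\<pi> = inv \<tau>"
  have pinv: "\<pi> permutes {1..n}" unfolding \<pi>_def by (rule permutes_inv[OF tau])
  define \<pi>' where "\<pi>' = (\<lambda>i. if \<pi> i < \<pi> n then \<pi> i + n - \<pi> n else \<pi> i - \<pi> n)"
  have b: "bij_betw \<pi>' {1..N} {1..N}" unfolding \<pi>'_def
    by (rule L2(1)[OF nN N1 permutes_imp_bij[OF pinv]])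
  have "lop_obj (ext_matrix A n) n \<tau> = gpos (ext_matrix A n) n \<pi>"
  proof (rule L1[OF _ permutes_imp_bij[OF pinv]])
    show "1 \<le> n" using nN by simp
    show "\<forall>i\<in>{1..n}. \<tau> (\<pi> i) = i" unfolding \<pi>_def using permutes_inverses(1)[OF tau] by simp
  qed
  also have "\<dots> = gpos A N \<pi>'" unfolding \<pi>'_def
    by (rule L2(2)[OF nN N1 permutes_imp_bij[OF pinv]])
  finally have eq: "lop_obj (ext_matrix A n) n \<tau> = gpos A N \<pi>'" .
  define \<rho> where "\<rho> = (\<lambda>k. if k \<in> {1..N} then inv_into {1..N} \<pi>' k else k)"
  have "bij_betw (inv_into {1..N} \<pi>') {1..N} {1..N}" using bij_betw_inv_into[OF b] .
  moreover have "\<forall>a\<in>{1..N}. \<rho> a = inv_into {1..N} \<pi>' a" by (simp add: \<rho>_def)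
  ultimately have "bij_betw \<rho> {1..N} {1..N}" by (subst bij_betw_cong[of "{1..N}" \<rho> "inv_into {1..N} \<pi>'"]) simp_all
  then have rp: "\<rho> permutes {1..N}"
  proof (rule bij_imp_permutes)
    fix x assume "x \<notin> {1..N}"
    then show "\<rho> x = x" unfolding \<rho>_def by (rule if_not_P)
  qed
  have "\<forall>i\<in>{1..N}. \<rho> (\<pi>' i) = i"
  proof
    fix i assume i: "i \<in> {1..N}"
    then have "\<pi>' i \<in> {1..N}" using bij_betwE[OF b] by blast
    then show "\<rho> (\<pi>' i) = i" unfolding \<rho>_def using inv_into_f_f[OF bij_betw_imp_inj_on[OF b] i] by simp
  qed
  then have "lop_obj A N \<rho> = gpos A N \<pi>'" using L1[OF N1 b] by blast
  then show ?thesis using eq rp by metis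
qed

theorem proposition4:
  fixes n :: nat and A :: "nat \<Rightarrow> nat \<Rightarrow> real" and \<sigma> :: "nat \<Rightarrow> nat"
  assumes "n \<ge> 3"
    and "\<forall>i \<in> {1..n - 1}. A i i = 0"
    and "\<sigma> permutes {1..n - 1}"
  shows "lop_global_max (ext_matrix A n) n (\<lambda>k. if k = n then n else \<sigma> k)
           \<longleftrightarrow> lop_global_max A (n - 1) \<sigma>"
proof -
  define N where "N = n - 1"
  have nN: "n = Suc N" and N1: "N \<ge> 1" using assms(1) unfolding N_def by arith+
  have Nd: "n - 1 = N" using nN by simp
  have sig: "\<sigma> permutes {1..N}" using assms(3) Nd by simp
  have seq: "(\<lambda>k. if k = n then n else \<sigma> k) = \<sigma>"
    using permutes_not_in[OF sig, of n] nN by auto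
  have sig': "\<sigma> permutes {1..n}" using permutes_subset[OF sig] nN by auto
  show ?thesis unfolding seq Nd lop_global_max_def
  proof
    assume h: "\<sigma> permutes {1..n} \<and> (\<forall>\<tau>. \<tau> permutes {1..n} \<longrightarrow> lop_obj (ext_matrix A n) n \<tau> \<le> lop_obj (ext_matrix A n) n \<sigma>)"
    show "\<sigma> permutes {1..N} \<and> (\<forall>\<tau>. \<tau> permutes {1..N} \<longrightarrow> lop_obj A N \<tau> \<le> lop_obj A N \<sigma>)"
    proof (intro conjI allI impI sig)
      fix \<tau> assume t: "\<tau> permutes {1..N}"
      have t': "\<tau> permutes {1..n}" using permutes_subset[OF t] nN by auto
      show "lop_obj A N \<tau> \<le> lop_obj A N \<sigma>"
        using h t' E[OF nN N1 t, of A] E[OF nN N1 sig, of A] by auto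
    qed
  next
    assume h: "\<sigma> permutes {1..N} \<and> (\<forall>\<tau>. \<tau> permutes {1..N} \<longrightarrow> lop_obj A N \<tau> \<le> lop_obj A N \<sigma>)"
    show "\<sigma> permutes {1..n} \<and> (\<forall>\<tau>. \<tau> permutes {1..n} \<longrightarrow> lop_obj (ext_matrix A n) n \<tau> \<le> lop_obj (ext_matrix A n) n \<sigma>)"
    proof (intro conjI allI impI sig')
      fix \<tau> assume t: "\<tau> permutes {1..n}"
      obtain \<rho> where r: "\<rho> permutes {1..N}" "lop_obj (ext_matrix A n) n \<tau> = lop_obj A N \<rho>"
        using Gen[OF nN N1 t] by blast
      show "lop_obj (ext_matrix A n) n \<tau> \<le> lop_obj (ext_matrix A n) n \<sigma>"
        using h r E[OF nN N1 sig, of A] by auto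
    qed
  qed
qed

end
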